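(* Let $(G,c,\{r_1,\dots,r_R\},X)$ be an instance of \textsc{Multi-Rooted Directed Steiner Tree} with $G$ planar. Let $T=F\cup\bigcup_{j=1}^q T_{p_j}$ be a multi-rooted partial arborescence in $G$, where $T_{p_j}$ is a partial arborescence rooted at $r_{p_j}$, and let $C_1,\dots,C_h$ be the weakly connected components of $G\setminus T$. Let $I_{C_1},\dots,I_{C_h}$ be the subinstances induced by $(G,T,C_1,\dots,C_h)$, and let $\mathcal F_{C_i}$ be a feasible solution for $I_{C_i}$. Let $\mathcal F\subseteq E(G)$ be the set of edges of $G$ corresponding to $(E(T)\setminus F)\cup\bigcup_{i=1}^h\mathcal F_{C_i}$. Then $\mathcal F$ is a feasible solution for the instance, and $\mathrm{cost}(\mathcal F)=\mathrm{cost}(T\setminus F)+\sum_{i=1}^h\mathrm{cost}(\mathcal F_{C_i})$.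
   Context: MR-DST: digraph $G=(V,E)$ (parallel edges allowed) with costs $c_e\ge0$, roots $r_1,\dots,r_R$, terminals $X\subseteq V\setminus\{r_1,\dots,r_R\}$; feasible $F\subseteq E$: every terminal is reachable from some root via edges of $F$; cost $\sum_{e\in F}c_e$. A partial arborescence rooted at $r$ is a subgraph containing $r$ that is a directed tree oriented away from $r$. A multi-rooted partial arborescence is a subgraph $T=F\cup\bigcup_{j=1}^q T_{i_j}$ where $T_{i_1},\dots,T_{i_q}$ are vertex-disjoint partial arborescences rooted at roots $r_{i_1},\dots,r_{i_q}$, $F$ is a set of edges not in any $T_{i_j}$ with both endpoints in $\bigcup_j V(T_{i_j})$, and $T$ is weakly connected and contains no cycle in the undirected sense. $\mathrm{cost}(T\setminus F)$ is the total cost of edges of $T$ not in $F$. Induced subinstances: contract $T$ into a single new vertex $r_T$ to get $G_{\mathrm{contract}}$ (edges inherit costs from their originals in $G$); for each $i$, $I_{C_i}=(G_{\mathrm{contract}}[C_i\cup\{r_T\}],c,\{r_T\}\cup(C_i\cap(\{r_1,\dots,r_R\}\setminus\{r_{p_1},\dots,r_{p_q}\})),C_i\cap X)$. $G\setminus T$ deletes $T$'s vertices and incident edges; weakly connected components are components of the underlying undirected graph. *)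

theory Defs
  imports "HOL-Analysis.Analysis" "Graph_Theory.Graph_Theory"
begin

text \<open>Digraphs with parallel arcs are modelled by the Graph_Theory record pre_digraph
  (vertex set, arc set, tail, head).\<close>

text \<open>Planarity: a geometric embedding into the plane (complex numbers = R^2):
  distinct vertices go to distinct points, each arc to a simple path (a simple
  closed curve for a loop) between the images of its endpoints, that meets no other
  vertex point, and two distinct arcs meet only in common endpoints.\<close>
definition planar :: "('v,'e) pre_digraph \<Rightarrow> bool" where
  "planar G \<longleftrightarrow> (\<exists>(p :: 'v \<Rightarrow> complex) (\<gamma> :: 'e \<Rightarrow> real \<Rightarrow> complex).
     inj_on p (verts G) \<and>
     (\<forall>e\<in>arcs G. simple_path (\<gamma> e) \<and>
        pathstart (\<gamma> e) = p (tail G e) \<and> pathfinish (\<gamma> e) = p (head G e) \<and>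
        path_image (\<gamma> e) \<inter> p ` verts G \<subseteq> {p (tail G e), p (head G e)}) \<and>
     (\<forall>e\<in>arcs G. \<forall>e'\<in>arcs G. e \<noteq> e' \<longrightarrow>
        path_image (\<gamma> e) \<inter> path_image (\<gamma> e') \<subseteq> p ` ({tail G e, head G e} \<inter> {tail G e', head G e'})))"

definition mrdst_instance :: "('v,'e) pre_digraph \<Rightarrow> ('e \<Rightarrow> real) \<Rightarrow> 'v set \<Rightarrow> 'v set \<Rightarrow> bool" where
  "mrdst_instance G c Rts X \<longleftrightarrow> fin_digraph G \<and> (\<forall>e\<in>arcs G. c e \<ge> 0) \<and>
     Rts \<subseteq> verts G \<and> X \<subseteq> verts G - Rts"

definition mrdst_feasible :: "('v,'e) pre_digraph \<Rightarrow> 'v set \<Rightarrow> 'v set \<Rightarrow> 'e set \<Rightarrow> bool" where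
  "mrdst_feasible G Rts X F \<longleftrightarrow> F \<subseteq> arcs G \<and>
     (\<forall>x\<in>X. \<exists>r\<in>Rts. r \<rightarrow>\<^sup>*\<^bsub>G\<lparr>arcs := F\<rparr>\<^esub> x)"

definition cost :: "('e \<Rightarrow> real) \<Rightarrow> 'e set \<Rightarrow> real" where
  "cost c F = (\<Sum>e\<in>F. c e)"

definition uconn :: "('v,'e) pre_digraph \<Rightarrow> 'e set \<Rightarrow> ('v \<times> 'v) set" where
  "uconn H Es = (\<Union>e\<in>Es. {(tail H e, head H e), (head H e, tail H e)})\<^sup>*"

definition u_acyclic :: "('v,'e) pre_digraph \<Rightarrow> bool" where
  "u_acyclic H \<longleftrightarrow> (\<forall>e\<in>arcs H. tail H e \<noteq> head H e \<and>
      (tail H e, head H e) \<notin> uconn H (arcs H - {e}))"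

definition partial_arb :: "('v,'e) pre_digraph \<Rightarrow> ('v,'e) pre_digraph \<Rightarrow> 'v \<Rightarrow> bool" where
  "partial_arb G A r \<longleftrightarrow> subgraph A G \<and> r \<in> verts A \<and> connected A \<and> u_acyclic A \<and>
     (\<forall>v\<in>verts A. r \<rightarrow>\<^sup>*\<^bsub>A\<^esub> v)"

definition mr_graph :: "('v,'e) pre_digraph \<Rightarrow> 'v set \<Rightarrow> ('v \<Rightarrow> ('v,'e) pre_digraph) \<Rightarrow> 'e set
    \<Rightarrow> ('v,'e) pre_digraph" where
  "mr_graph G P A F = \<lparr> verts = (\<Union>p\<in>P. verts (A p)), arcs = F \<union> (\<Union>p\<in>P. arcs (A p)),
     tail = tail G, head = head G \<rparr>"

text \<open>Multi-rooted partial arborescence with root set P (the roots r_{p_1},...,r_{p_q}),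
  arborescences A p and extra arc set F.\<close>
definition mr_partial_arb :: "('v,'e) pre_digraph \<Rightarrow> 'v set \<Rightarrow> 'v set \<Rightarrow> ('v \<Rightarrow> ('v,'e) pre_digraph)
    \<Rightarrow> 'e set \<Rightarrow> bool" where
  "mr_partial_arb G Rts P A F \<longleftrightarrow> P \<subseteq> Rts \<and> P \<noteq> {} \<and>
     (\<forall>p\<in>P. partial_arb G (A p) p) \<and>
     (\<forall>p\<in>P. \<forall>p'\<in>P. p \<noteq> p' \<longrightarrow> verts (A p) \<inter> verts (A p') = {}) \<and>
     F \<subseteq> arcs G \<and> (\<forall>p\<in>P. F \<inter> arcs (A p) = {}) \<and>
     (\<forall>e\<in>F. tail G e \<in> (\<Union>p\<in>P. verts (A p)) \<and> head G e \<in> (\<Union>p\<in>P. verts (A p))) \<and>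
     connected (mr_graph G P A F) \<and> u_acyclic (mr_graph G P A F)"

definition weak_components :: "('v,'e) pre_digraph \<Rightarrow> 'v set set" where
  "weak_components H = {{v\<in>verts H. (u, v) \<in> uconn H (arcs H)} | u. u \<in> verts H}"

definition del_verts :: "('v,'e) pre_digraph \<Rightarrow> 'v set \<Rightarrow> ('v,'e) pre_digraph" where
  "del_verts G S = G \<restriction> (verts G - S)"

text \<open>Contraction of the vertex set S into the new vertex None (= r_T); other vertices v
  become Some v; arcs keep their identity (and hence their cost); arcs with both
  endpoints in S (which would become loops) are removed.\<close>
definition contract :: "('v,'e) pre_digraph \<Rightarrow> 'v set \<Rightarrow> ('v option,'e) pre_digraph" where
  "contract G S = \<lparr> verts = insert None (Some ` (verts G - S)),
     arcs = {e\<in>arcs G. \<not> (tail G e \<in> S \<and> head G e \<in> S)},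
     tail = (\<lambda>e. if tail G e \<in> S then None else Some (tail G e)),
     head = (\<lambda>e. if head G e \<in> S then None else Some (head G e)) \<rparr>"

definition sub_graph :: "('v,'e) pre_digraph \<Rightarrow> 'v set \<Rightarrow> 'v set \<Rightarrow> ('v option,'e) pre_digraph" where
  "sub_graph G S C = contract G S \<restriction> insert None (Some ` C)"

definition sub_roots :: "'v set \<Rightarrow> 'v set \<Rightarrow> 'v set \<Rightarrow> 'v option set" where
  "sub_roots Rts P C = insert None (Some ` (C \<inter> (Rts - P)))"

definition sub_terms :: "'v set \<Rightarrow> 'v set \<Rightarrow> 'v option set" where
  "sub_terms X C = Some ` (C \<inter> X)"

end

theory Submission
  imports Defs
begin

lemma reach_transfer:
  assumes "u \<rightarrow>\<^sup>*\<^bsub>H\<^esub> v" "verts H \<subseteq> verts G"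
    and "\<And>e. e \<in> arcs H \<Longrightarrow> e \<in> Fs \<and> tail H e = tail G e \<and> head H e = head G e"
  shows "u \<rightarrow>\<^sup>*\<^bsub>G\<lparr>arcs := Fs\<rparr>\<^esub> v"
  using assms(1) unfolding reachable_def
proof (induct rule: rtrancl_on_induct)
  case base
  then show ?case using assms(2) by auto
next
  case (step x y)
  then obtain e where e: "e \<in> arcs H" "tail H e = x" "head H e = y"
    by (auto simp: arcs_ends_conv)
  have "(x, y) \<in> arcs_ends (G\<lparr>arcs := Fs\<rparr>)" using assms(3)[OF e(1)] e
    by (auto simp: arcs_ends_conv intro!: image_eqI[where x=e])
  then show ?case using step assms(2)
    by (auto intro: rtrancl_on_into_rtrancl_on)
qed

lemma reach_step:
  assumes "r \<rightarrow>\<^sup>*\<^bsub>G\<lparr>arcs := Fs\<rparr>\<^esub> u" "e \<in> Fs" "tail G e = u" "head G e \<in> verts G"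
  shows "r \<rightarrow>\<^sup>*\<^bsub>G\<lparr>arcs := Fs\<rparr>\<^esub> head G e"
proof -
  have "(u, head G e) \<in> arcs_ends (G\<lparr>arcs := Fs\<rparr>)" using assms
    by (auto simp: arcs_ends_conv intro!: image_eqI[where x=e])
  with assms(1,4) show ?thesis unfolding reachable_def
    by (auto intro: rtrancl_on_into_rtrancl_on)
qed

theorem lemma4:
  fixes G :: "('v,'e) pre_digraph" and c :: "'e \<Rightarrow> real"
    and Rts X P :: "'v set" and A :: "'v \<Rightarrow> ('v,'e) pre_digraph" and F :: "'e set"
    and FC :: "'v set \<Rightarrow> 'e set"
  assumes inst: "mrdst_instance G c Rts X"
    and plan: "planar G"
    and T: "mr_partial_arb G Rts P A F"
    and sol: "\<forall>C\<in>weak_components (del_verts G (verts (mr_graph G P A F))).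
       mrdst_feasible (sub_graph G (verts (mr_graph G P A F)) C)
         (sub_roots Rts P C) (sub_terms X C) (FC C)"
  shows "mrdst_feasible G Rts X
           ((arcs (mr_graph G P A F) - F) \<union>
            (\<Union>C\<in>weak_components (del_verts G (verts (mr_graph G P A F))). FC C))
       \<and> cost c ((arcs (mr_graph G P A F) - F) \<union>
            (\<Union>C\<in>weak_components (del_verts G (verts (mr_graph G P A F))). FC C))
         = cost c (arcs (mr_graph G P A F) - F)
           + (\<Sum>C\<in>weak_components (del_verts G (verts (mr_graph G P A F))). cost c (FC C))"
proof -
  define S where "S = verts (mr_graph G P A F)"
  define W where "W = weak_components (del_verts G S)"
  define Fs where "Fs = (arcs (mr_graph G P A F) - F) \<union> (\<Union>C\<in>W. FC C)"
  have fin: "fin_digraph G" using inst by (simp add: mrdst_instance_def)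
  interpret fin_digraph G by (rule fin)
  have S_def': "S = (\<Union>p\<in>P. verts (A p))" by (simp add: S_def mr_graph_def)
  have PR: "P \<subseteq> Rts" and arb: "\<And>p. p \<in> P \<Longrightarrow> partial_arb G (A p) p"
    and FA: "\<And>p. p \<in> P \<Longrightarrow> F \<inter> arcs (A p) = {}"
    using T by (auto simp: mr_partial_arb_def)
  have TA: "arcs (mr_graph G P A F) - F = (\<Union>p\<in>P. arcs (A p))"
    using FA by (auto simp: mr_graph_def)
  have sgA: "\<And>p. p \<in> P \<Longrightarrow> subgraph (A p) G" using arb by (simp add: partial_arb_def)
  have Aarc: "\<And>p e. p \<in> P \<Longrightarrow> e \<in> arcs (A p) \<Longrightarrow> e \<in> arcs G \<and> tail G e \<in> S \<and> head G e \<in> S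
      \<and> tail (A p) e = tail G e \<and> head (A p) e = head G e"
  proof -
    fix p e assume p: "p \<in> P" and e: "e \<in> arcs (A p)"
    have sg: "subgraph (A p) G" by (rule sgA[OF p])
    then have wf: "wf_digraph (A p)" and c: "compatible G (A p)"
      and ss: "arcs (A p) \<subseteq> arcs G"
      by (auto simp: subgraph_def)
    have "tail (A p) e \<in> verts (A p)" "head (A p) e \<in> verts (A p)"
      using wf e by (auto simp: wf_digraph_def)
    then show "e \<in> arcs G \<and> tail G e \<in> S \<and> head G e \<in> S
      \<and> tail (A p) e = tail G e \<and> head (A p) e = head G e"
      using c ss e p by (auto simp: compatible_def S_def')
  qed
  have Wsub: "\<And>C. C \<in> W \<Longrightarrow> C \<subseteq> verts G - S"
    by (auto simp: W_def weak_components_def del_verts_def)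
  have Wdisj: "\<And>C C'. C \<in> W \<Longrightarrow> C' \<in> W \<Longrightarrow> C \<inter> C' \<noteq> {} \<Longrightarrow> C = C'"
  proof -
    fix C C' assume C: "C \<in> W" and C': "C' \<in> W" and ne: "C \<inter> C' \<noteq> {}"
    define R where "R = uconn (del_verts G S) (arcs (del_verts G S))"
    have symR: "sym R" unfolding R_def uconn_def
      by (rule sym_rtrancl) (auto simp: sym_def)
    have transR: "trans R" unfolding R_def uconn_def by (rule trans_rtrancl)
    obtain u where u: "C = {v\<in>verts (del_verts G S). (u, v) \<in> R}"
      using C by (auto simp: W_def weak_components_def R_def)
    obtain u' where u': "C' = {v\<in>verts (del_verts G S). (u', v) \<in> R}"
      using C' by (auto simp: W_def weak_components_def R_def)
    obtain w where "w \<in> C" "w \<in> C'" using ne by auto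
    then have "(u,w) \<in> R" "(u',w) \<in> R" using u u' by auto
    then have "(u,u') \<in> R" "(u',u) \<in> R" using symR transR
      by (meson symD transD)+
    then show "C = C'" unfolding u u' using transR by (auto dest: transD)
  qed
  have FCprop: "\<And>C e. C \<in> W \<Longrightarrow> e \<in> FC C \<Longrightarrow> e \<in> arcs G \<and>
      (tail G e \<in> S \<or> tail G e \<in> C) \<and> (head G e \<in> S \<or> head G e \<in> C) \<and>
      \<not> (tail G e \<in> S \<and> head G e \<in> S)"
  proof -
    fix C e assume C: "C \<in> W" and e: "e \<in> FC C"
    have "FC C \<subseteq> arcs (sub_graph G S C)"
      using sol C by (auto simp: W_def S_def mrdst_feasible_def)
    with e show "e \<in> arcs G \<and>
      (tail G e \<in> S \<or> tail G e \<in> C) \<and> (head G e \<in> S \<or> head G e \<in> C) \<and>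
      \<not> (tail G e \<in> S \<and> head G e \<in> S)"
      by (auto simp: sub_graph_def contract_def split: if_splits)
  qed
  have finW: "finite W"
  proof -
    have "W \<subseteq> Pow (verts G)" using Wsub by auto
    then show ?thesis by (rule finite_subset) simp
  qed
  have FsG: "Fs \<subseteq> arcs G" using Aarc FCprop by (auto simp: Fs_def TA)
  have reachS: "\<And>v. v \<in> S \<Longrightarrow> \<exists>r\<in>Rts. r \<rightarrow>\<^sup>*\<^bsub>G\<lparr>arcs := Fs\<rparr>\<^esub> v"
  proof -
    fix v assume "v \<in> S"
    then obtain p where p: "p \<in> P" and v: "v \<in> verts (A p)" by (auto simp: S_def')
    have "p \<rightarrow>\<^sup>*\<^bsub>A p\<^esub> v" using arb[OF p] v by (simp add: partial_arb_def)
    moreover have "verts (A p) \<subseteq> verts G" using sgA[OF p] by (simp add: subgraph_def)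
    ultimately have "p \<rightarrow>\<^sup>*\<^bsub>G\<lparr>arcs := Fs\<rparr>\<^esub> v"
      by (rule reach_transfer) (use Aarc p in \<open>auto simp: Fs_def TA\<close>)
    then show "\<exists>r\<in>Rts. r \<rightarrow>\<^sup>*\<^bsub>G\<lparr>arcs := Fs\<rparr>\<^esub> v" using p PR by auto
  qed
  have feas: "mrdst_feasible G Rts X Fs"
    unfolding mrdst_feasible_def
  proof (intro conjI ballI FsG)
    fix x assume xX: "x \<in> X"
    show "\<exists>r\<in>Rts. r \<rightarrow>\<^sup>*\<^bsub>G\<lparr>arcs := Fs\<rparr>\<^esub> x"
    proof (cases "x \<in> S")
      case True then show ?thesis by (rule reachS)
    next
      case False
      have xV: "x \<in> verts G" using xX inst by (auto simp: mrdst_instance_def)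
      define C where "C = {v\<in>verts (del_verts G S). (x, v) \<in> uconn (del_verts G S) (arcs (del_verts G S))}"
      have CW: "C \<in> W" unfolding W_def weak_components_def C_def
        using xV False by (auto simp: del_verts_def)
      have xC: "x \<in> C" unfolding C_def using xV False by (auto simp: del_verts_def uconn_def)
      define H where "H = (sub_graph G S C)\<lparr>arcs := FC C\<rparr>"
      have "\<exists>\<rho>\<in>sub_roots Rts P C. \<rho> \<rightarrow>\<^sup>*\<^bsub>H\<^esub> Some x"
        using sol CW xX xC by (auto simp: W_def S_def H_def mrdst_feasible_def sub_terms_def)
      have Harcs: "arcs H = FC C" by (simp add: H_def)
      have Htail: "\<And>e. tail H e = (if tail G e \<in> S then None else Some (tail G e))"
        by (simp add: H_def sub_graph_def contract_def)
      have Hhead: "\<And>e. head H e = (if head G e \<in> S then None else Some (head G e))"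
        by (simp add: H_def sub_graph_def contract_def)
      from \<open>\<exists>\<rho>\<in>sub_roots Rts P C. \<rho> \<rightarrow>\<^sup>*\<^bsub>H\<^esub> Some x\<close> obtain \<rho> where \<rho>: "\<rho> \<in> sub_roots Rts P C" and reach: "\<rho> \<rightarrow>\<^sup>*\<^bsub>H\<^esub> Some x" by blast
      have "\<forall>v. w = Some v \<longrightarrow> (\<exists>r\<in>Rts. r \<rightarrow>\<^sup>*\<^bsub>G\<lparr>arcs := Fs\<rparr>\<^esub> v)"
        if "\<rho> \<rightarrow>\<^sup>*\<^bsub>H\<^esub> w" for w
        using that unfolding reachable_def
      proof (induct rule: rtrancl_on_induct)
        case base
        show ?case
        proof (intro allI impI)
          fix v assume "\<rho> = Some v"
          then have "v \<in> Rts" "v \<in> verts G" using \<rho> Wsub[OF CW]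
            by (auto simp: sub_roots_def)
          then show "\<exists>r\<in>Rts. (r, v) \<in> rtrancl_on (verts (G\<lparr>arcs := Fs\<rparr>)) (arcs_ends (G\<lparr>arcs := Fs\<rparr>))"
            by (intro bexI[of _ v] rtrancl_on_refl) simp_all
        qed
      next
        case (step y z)
        from step(2) obtain e where e: "e \<in> FC C" "tail H e = y" "head H e = z"
          unfolding arcs_ends_conv Harcs by blast
        have eF: "e \<in> Fs" using e(1) CW unfolding Fs_def by blast
        have ep: "e \<in> arcs G \<and>
          (tail G e \<in> S \<or> tail G e \<in> C) \<and> (head G e \<in> S \<or> head G e \<in> C) \<and>
          \<not> (tail G e \<in> S \<and> head G e \<in> S)" by (rule FCprop[OF CW e(1)])
        have tl: "\<exists>r\<in>Rts. r \<rightarrow>\<^sup>*\<^bsub>G\<lparr>arcs := Fs\<rparr>\<^esub> tail G e"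
        proof (cases "tail G e \<in> S")
          case True then show ?thesis by (rule reachS)
        next
          case False
          then have "y = Some (tail G e)" using e(2) Htail by simp
          with step(5) show ?thesis unfolding reachable_def by simp
        qed
        show ?case
        proof (intro allI impI)
          fix v assume "z = Some v"
          then have hv: "head G e = v" using e(3) Hhead[of e]
            by (simp split: if_splits)
          from tl obtain r where "r \<in> Rts" "r \<rightarrow>\<^sup>*\<^bsub>G\<lparr>arcs := Fs\<rparr>\<^esub> tail G e" by blast
          moreover have "head G e \<in> verts G" using ep by simp
          ultimately have "r \<rightarrow>\<^sup>*\<^bsub>G\<lparr>arcs := Fs\<rparr>\<^esub> v"
            using reach_step[OF _ eF refl] hv by metis
          then show "\<exists>r\<in>Rts. (r, v) \<in> rtrancl_on (verts (G\<lparr>arcs := Fs\<rparr>)) (arcs_ends (G\<lparr>arcs := Fs\<rparr>))"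
            using \<open>r \<in> Rts\<close> unfolding reachable_def by blast
        qed
      qed
      from this[OF reach] show ?thesis by simp
    qed
  qed
  have disj1: "(arcs (mr_graph G P A F) - F) \<inter> (\<Union>C\<in>W. FC C) = {}"
  proof -
    have "\<And>e p C. p \<in> P \<Longrightarrow> e \<in> arcs (A p) \<Longrightarrow> C \<in> W \<Longrightarrow> e \<in> FC C \<Longrightarrow> False"
      using Aarc FCprop by blast
    then show ?thesis unfolding TA by blast
  qed
  have finFC: "\<And>C. C \<in> W \<Longrightarrow> finite (FC C)"
    using FCprop by (meson finite_arcs finite_subset subsetI)
  have disjFC: "\<And>C C'. C \<in> W \<Longrightarrow> C' \<in> W \<Longrightarrow> C \<noteq> C' \<Longrightarrow> FC C \<inter> FC C' = {}"
  proof (rule ccontr)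
    fix C C' assume C: "C \<in> W" and C': "C' \<in> W" and ne: "C \<noteq> C'" and "FC C \<inter> FC C' \<noteq> {}"
    then obtain e where "e \<in> FC C" "e \<in> FC C'" by auto
    then have "C \<inter> C' \<noteq> {}" using FCprop[OF C] FCprop[OF C'] Wsub[OF C] Wsub[OF C'] by blast
    then show False using Wdisj[OF C C'] ne by simp
  qed
  have fin1: "finite (arcs (mr_graph G P A F) - F)"
    using Aarc by (intro finite_subset[OF _ finite_arcs]) (auto simp: TA)
  have "cost c Fs = cost c (arcs (mr_graph G P A F) - F) + cost c (\<Union>C\<in>W. FC C)"
    unfolding cost_def Fs_def
    by (rule sum.union_disjoint[OF fin1 _ disj1]) (use finW finFC in auto)
  also have "cost c (\<Union>C\<in>W. FC C) = (\<Sum>C\<in>W. cost c (FC C))"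
    unfolding cost_def by (rule sum.UNION_disjoint[OF finW]) (use finFC disjFC in auto)
  finally show ?thesis using feas by (simp add: Fs_def W_def S_def)
qed

end
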